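(* Let $\mathcal D\subset\mathbb R^n$ be a symmetric dictionary of unit vectors and let $\|\cdot\|_{\mathcal A}$ be its atomic norm. Let $s\ge 1$ and let $S=\{x_{i_1},\dots,x_{i_s}\}\subset\mathcal D$ be $s$ atoms with pairwise coherence \[ \mu_S:=\max_{p\neq q}|\langle x_{i_p},x_{i_q}\rangle|<\frac{1}{s-1} \] (no condition if $s=1$). Let $y\in\mathrm{span}(S)$. Then for every $f\in\mathrm{span}(S)$ (in particular for every iterate $f=f_m$ of a method whose iterates lie in $\mathrm{span}(S)$), with $r=y-f$, \[ \|r\|_2\;\ge\;\frac{\sqrt{1-(s-1)\mu_S}}{\sqrt s}\,\bigl(\|y\|_{\mathcal A}-\|f\|_{\mathcal A}\bigr). \]
   Context: A dictionary $\mathcal D\subset\mathbb R^n$ is a set of unit vectors (Euclidean norm $\|\cdot\|_2$); it is symmetric if $g\in\mathcal D\Rightarrow -g\in\mathcal D$. The atomic norm of $\mathcal D$ is the Minkowski functional of $B=\mathrm{conv}(\mathcal D)$: $\|u\|_{\mathcal A}=\inf\{t>0: u\in tB\}$ (finite for $u\in\mathrm{span}(\mathcal D)$). *)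

theory Defs
  imports "HOL-Analysis.Analysis"
begin

definition dictionary :: "'a::euclidean_space set \<Rightarrow> bool" where
  "dictionary D \<longleftrightarrow> (\<forall>g\<in>D. norm g = 1)"

definition symmetric_dict :: "'a::euclidean_space set \<Rightarrow> bool" where
  "symmetric_dict D \<longleftrightarrow> (\<forall>g\<in>D. - g \<in> D)"

definition atomic_norm :: "'a::euclidean_space set \<Rightarrow> 'a \<Rightarrow> real" where
  "atomic_norm D u = Inf {t. t > 0 \<and> u \<in> (\<lambda>v. t *\<^sub>R v) ` (convex hull D)}"

definition coherence :: "'a::euclidean_space set \<Rightarrow> real" where
  "coherence S = (if card S \<le> 1 then 0
     else Max {\<bar>x \<bullet> z\<bar> | x z. x \<in> S \<and> z \<in> S \<and> x \<noteq> z})"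

end

theory Submission imports Defs begin

lemma zero_in_hull:
  assumes "symmetric_dict D" "x \<in> D"
  shows "(0::'a::euclidean_space) \<in> convex hull D"
proof -
  have "-x \<in> D" using assms unfolding symmetric_dict_def by blast
  hence "(1/2::real) *\<^sub>R x + (1 - 1/2) *\<^sub>R (-x) \<in> convex hull D"
    using assms(2) by (intro convexD[OF convex_convex_hull]) (auto intro: hull_inc)
  thus ?thesis by simp
qed

lemma in_scaled_hull:
  fixes D S :: "'a::euclidean_space set"
  assumes sym: "symmetric_dict D" and SD: "S \<subseteq> D" and fin: "finite S" and ne: "S \<noteq> {}"
    and t: "t > 0" and W: "(\<Sum>x\<in>S. \<bar>c x\<bar>) \<le> t"
  shows "\<exists>k\<in>convex hull D. (\<Sum>x\<in>S. c x *\<^sub>R x) = t *\<^sub>R k"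
proof -
  obtain x0 where "x0 \<in> S" using ne by blast
  hence z: "0 \<in> convex hull D" using zero_in_hull[OF sym] SD by blast
  define Wt where "Wt = (\<Sum>x\<in>S. \<bar>c x\<bar>)"
  show ?thesis
  proof (cases "Wt = 0")
    case True
    hence "\<forall>x\<in>S. c x = 0" using fin unfolding Wt_def by (simp add: sum_nonneg_eq_0_iff)
    hence "(\<Sum>x\<in>S. c x *\<^sub>R x) = 0" by simp
    thus ?thesis using z by (intro bexI[of _ 0]) auto
  next
    case False
    hence Wp: "Wt > 0" unfolding Wt_def by (metis abs_ge_zero order_less_le sum_nonneg)
    define v where "v = (\<Sum>x\<in>S. (\<bar>c x\<bar> / Wt) *\<^sub>R (sgn (c x) *\<^sub>R x))"
    have v: "v \<in> convex hull D" unfolding v_def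
    proof (rule convex_sum[OF fin convex_convex_hull])
      show "(\<Sum>i\<in>S. \<bar>c i\<bar> / Wt) = 1" using Wp unfolding Wt_def by (simp add: sum_divide_distrib[symmetric])
      show "\<And>i. i \<in> S \<Longrightarrow> 0 \<le> \<bar>c i\<bar> / Wt" using Wp by simp
      fix i assume i: "i \<in> S"
      hence iD: "i \<in> D" "-i \<in> D" using SD sym unfolding symmetric_dict_def by auto
      show "sgn (c i) *\<^sub>R i \<in> convex hull D"
        using z iD by (cases "c i > 0"; cases "c i < 0") (auto intro: hull_inc simp: sgn_real_def)
    qed
    have "(Wt / t) *\<^sub>R v + (1 - Wt / t) *\<^sub>R 0 \<in> convex hull D"
      using v z t Wp W unfolding Wt_def[symmetric]
      by (intro convexD[OF convex_convex_hull]) auto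
    moreover have "t *\<^sub>R ((Wt / t) *\<^sub>R v) = (\<Sum>x\<in>S. c x *\<^sub>R x)"
      using t Wp unfolding v_def by (simp add: scaleR_sum_right abs_mult_sgn)
    ultimately show ?thesis by (intro bexI[of _ "(Wt / t) *\<^sub>R v"]) auto
  qed
qed


lemma atomic_diff_le:
  fixes D S :: "'a::euclidean_space set"
  assumes sym: "symmetric_dict D" and SD: "S \<subseteq> D" and fin: "finite S" and ne: "S \<noteq> {}"
    and f: "f \<in> span S" and r: "y - f = (\<Sum>x\<in>S. c x *\<^sub>R x)"
  shows "atomic_norm D y - atomic_norm D f \<le> (\<Sum>x\<in>S. \<bar>c x\<bar>)"
proof (rule field_le_epsilon)
  fix e :: real assume e: "0 < e"
  define A where "A u = {t. t > 0 \<and> u \<in> (\<lambda>v. t *\<^sub>R v) ` (convex hull D)}" for u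
  have an: "atomic_norm D u = Inf (A u)" for u unfolding atomic_norm_def A_def by simp
  have bdd: "bdd_below (A u)" for u unfolding A_def by (rule bdd_belowI[of _ 0]) auto
  define t where "t = (\<Sum>x\<in>S. \<bar>c x\<bar>) + e"
  have tp: "t > 0" unfolding t_def using e by (simp add: sum_nonneg add_nonneg_pos)
  obtain k2 where k2: "k2 \<in> convex hull D" "y - f = t *\<^sub>R k2"
    using in_scaled_hull[OF sym SD fin ne tp, of c] r unfolding t_def using e by auto
  obtain cf where cf: "f = (\<Sum>x\<in>S. cf x *\<^sub>R x)" using f span_finite[OF fin] by blast
  have tfp: "(\<Sum>x\<in>S. \<bar>cf x\<bar>) + 1 > 0" by (simp add: sum_nonneg add_nonneg_pos)
  obtain k1 where "k1 \<in> convex hull D" "f = ((\<Sum>x\<in>S. \<bar>cf x\<bar>) + 1) *\<^sub>R k1"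
    using in_scaled_hull[OF sym SD fin ne tfp, of cf] cf by auto
  hence Afne: "A f \<noteq> {}" unfolding A_def using tfp by blast
  have "Inf (A y) - t \<le> Inf (A f)"
  proof (rule cInf_greatest[OF Afne])
    fix a assume "a \<in> A f"
    then obtain k1 where a: "a > 0" "k1 \<in> convex hull D" "f = a *\<^sub>R k1" unfolding A_def by auto
    have "(a / (a + t)) *\<^sub>R k1 + (t / (a + t)) *\<^sub>R k2 \<in> convex hull D"
      using a tp k2 by (intro convexD[OF convex_convex_hull]) (auto simp: add_divide_distrib[symmetric])
    moreover have "y = (a + t) *\<^sub>R ((a / (a + t)) *\<^sub>R k1 + (t / (a + t)) *\<^sub>R k2)"
    proof -
      have "y = f + (y - f)" by simp
      also have "\<dots> = a *\<^sub>R k1 + t *\<^sub>R k2" using a k2 by simp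
      also have "\<dots> = (a + t) *\<^sub>R ((a / (a + t)) *\<^sub>R k1 + (t / (a + t)) *\<^sub>R k2)"
        using a tp by (simp add: scaleR_add_right)
      finally show ?thesis .
    qed
    ultimately have "a + t \<in> A y" unfolding A_def using a tp by auto
    hence "Inf (A y) \<le> a + t" by (rule cInf_lower[OF _ bdd])
    thus "Inf (A y) - t \<le> a" by simp
  qed
  thus "atomic_norm D y - atomic_norm D f \<le> (\<Sum>x\<in>S. \<bar>c x\<bar>) + e"
    unfolding an t_def by simp
qed

lemma coherence_props:
  fixes S :: "'a::euclidean_space set"
  assumes fin: "finite S"
  shows "coherence S \<ge> 0" and "\<And>x z. x \<in> S \<Longrightarrow> z \<in> S \<Longrightarrow> x \<noteq> z \<Longrightarrow> \<bar>x \<bullet> z\<bar> \<le> coherence S"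
proof -
  define M where "M = {\<bar>x \<bullet> z\<bar> | x z. x \<in> S \<and> z \<in> S \<and> x \<noteq> z}"
  have Mfin: "finite M"
  proof -
    have "M \<subseteq> (\<lambda>(x,z). \<bar>x \<bullet> z\<bar>) ` (S \<times> S)" unfolding M_def by auto
    thus ?thesis using fin by (meson finite_SigmaI finite_imageI finite_subset)
  qed
  have gen: "\<bar>x \<bullet> z\<bar> \<le> coherence S" if "x \<in> S" "z \<in> S" "x \<noteq> z" for x z
  proof -
    have "card S \<noteq> 0" "card S \<noteq> 1" using that fin by (auto simp: card_1_singleton_iff)
    hence "coherence S = Max M" unfolding coherence_def M_def by auto
    moreover have "\<bar>x \<bullet> z\<bar> \<in> M" unfolding M_def using that by blast
    ultimately show ?thesis using Max_ge[OF Mfin] by simp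
  qed
  thus "\<And>x z. x \<in> S \<Longrightarrow> z \<in> S \<Longrightarrow> x \<noteq> z \<Longrightarrow> \<bar>x \<bullet> z\<bar> \<le> coherence S" by blast
  show "coherence S \<ge> 0"
  proof (cases "card S \<le> 1")
    case True thus ?thesis unfolding coherence_def by simp
  next
    case False
    then obtain x z where "x \<in> S" "z \<in> S" "x \<noteq> z"
      by (metis card_le_Suc0_iff_eq One_nat_def fin)
    thus ?thesis using gen[of x z] by (meson abs_ge_zero order_trans)
  qed
qed

lemma norm_lower:
  fixes S D :: "'a::euclidean_space set"
  assumes dict: "dictionary D" and SD: "S \<subseteq> D" and fin: "finite S"
  shows "(1 - (real (card S) - 1) * coherence S) * (\<Sum>x\<in>S. (c x)\<^sup>2) \<le> (norm (\<Sum>x\<in>S. c x *\<^sub>R x))\<^sup>2"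
proof -
  define \<mu> where "\<mu> = coherence S"
  define W where "W = (\<Sum>x\<in>S. \<bar>c x\<bar>)"
  define Q where "Q = (\<Sum>x\<in>S. (c x)\<^sup>2)"
  have mu0: "\<mu> \<ge> 0" and coh: "\<And>x z. x \<in> S \<Longrightarrow> z \<in> S \<Longrightarrow> x \<noteq> z \<Longrightarrow> \<bar>x \<bullet> z\<bar> \<le> \<mu>"
    using coherence_props[OF fin] unfolding \<mu>_def by auto
  have unit: "x \<bullet> x = 1" if "x \<in> S" for x
    using that SD dict unfolding dictionary_def by (metis inner_commute norm_eq_1 subsetD)
  have inner: "(\<Sum>z\<in>S - {x}. c x * c z * (x \<bullet> z)) \<ge> - \<mu> * (\<bar>c x\<bar> * W - (c x)\<^sup>2)" if x: "x \<in> S" for x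
  proof -
    have "(\<Sum>z\<in>S - {x}. c x * c z * (x \<bullet> z)) \<ge> (\<Sum>z\<in>S - {x}. - \<mu> * (\<bar>c x\<bar> * \<bar>c z\<bar>))"
    proof (rule sum_mono)
      fix z assume z: "z \<in> S - {x}"
      have "\<bar>c x * c z * (x \<bullet> z)\<bar> \<le> \<bar>c x\<bar> * \<bar>c z\<bar> * \<mu>"
        using coh[of x z] x z by (auto simp: abs_mult intro!: mult_left_mono)
      thus "- \<mu> * (\<bar>c x\<bar> * \<bar>c z\<bar>) \<le> c x * c z * (x \<bullet> z)" by (simp add: abs_le_iff algebra_simps)
    qed
    also have "(\<Sum>z\<in>S - {x}. - \<mu> * (\<bar>c x\<bar> * \<bar>c z\<bar>)) = - \<mu> * \<bar>c x\<bar> * (\<Sum>z\<in>S - {x}. \<bar>c z\<bar>)"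
      by (simp add: sum_distrib_left mult.assoc)
    also have "(\<Sum>z\<in>S - {x}. \<bar>c z\<bar>) = W - \<bar>c x\<bar>" unfolding W_def using fin x by (simp add: sum_diff1)
    also have "- \<mu> * \<bar>c x\<bar> * (W - \<bar>c x\<bar>) = - \<mu> * (\<bar>c x\<bar> * W - (c x)\<^sup>2)"
      by (simp add: algebra_simps power2_eq_square)
    finally show ?thesis .
  qed
  have "(norm (\<Sum>x\<in>S. c x *\<^sub>R x))\<^sup>2 = (\<Sum>x\<in>S. \<Sum>z\<in>S. c x * c z * (x \<bullet> z))"
    by (simp add: power2_norm_eq_inner inner_sum_left inner_sum_right sum_distrib_left inner_commute mult.assoc mult.left_commute)
  also have "\<dots> = (\<Sum>x\<in>S. (c x)\<^sup>2 + (\<Sum>z\<in>S - {x}. c x * c z * (x \<bullet> z)))"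
    by (rule sum.cong[OF refl], subst sum.remove[OF fin], assumption)
       (simp add: unit power2_eq_square)
  also have "\<dots> \<ge> (\<Sum>x\<in>S. (c x)\<^sup>2 + - \<mu> * (\<bar>c x\<bar> * W - (c x)\<^sup>2))"
    by (rule sum_mono) (use inner in auto)
  finally have n1: "(norm (\<Sum>x\<in>S. c x *\<^sub>R x))\<^sup>2 \<ge> (\<Sum>x\<in>S. (c x)\<^sup>2 + - \<mu> * (\<bar>c x\<bar> * W - (c x)\<^sup>2))" .
  have "(\<Sum>x\<in>S. (c x)\<^sup>2 + - \<mu> * (\<bar>c x\<bar> * W - (c x)\<^sup>2)) = Q - \<mu> * (W\<^sup>2 - Q)"
    unfolding Q_def W_def
    by (simp add: sum.distrib sum_subtractf sum_distrib_left sum_distrib_right power2_eq_square algebra_simps sum_negf)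
  moreover have "W\<^sup>2 \<le> Q * card S" unfolding W_def Q_def
    using sum_squared_le_sum_of_squares[of "\<lambda>x. \<bar>c x\<bar>" S] by simp
  hence "\<mu> * (W\<^sup>2 - Q) \<le> \<mu> * (Q * card S - Q)" using mu0 by (intro mult_left_mono) auto
  ultimately show ?thesis using n1 unfolding Q_def[symmetric] \<mu>_def[symmetric]
    by (simp add: algebra_simps)
qed

theorem mainTheorem2:
  fixes D S :: "'a::euclidean_space set" and s :: nat and y f :: 'a
  assumes "dictionary D" and "symmetric_dict D"
    and "S \<subseteq> D" and "finite S" and "card S = s" and "s \<ge> 1"
    and "s = 1 \<or> coherence S < 1 / (real s - 1)"
    and "y \<in> span S" and "f \<in> span S"
  shows "norm (y - f) \<ge>
    sqrt (1 - (real s - 1) * coherence S) / sqrt (real s) * (atomic_norm D y - atomic_norm D f)"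
proof -
  have ne: "S \<noteq> {}" using assms(5,6) by auto
  have "y - f \<in> span S" using assms(8,9) by (rule span_diff)
  then obtain c where r: "y - f = (\<Sum>x\<in>S. c x *\<^sub>R x)" using span_finite[OF assms(4)] by blast
  define W where "W = (\<Sum>x\<in>S. \<bar>c x\<bar>)"
  define Q where "Q = (\<Sum>x\<in>S. (c x)\<^sup>2)"
  define \<alpha> where "\<alpha> = 1 - (real s - 1) * coherence S"
  define \<Delta> where "\<Delta> = atomic_norm D y - atomic_norm D f"
  have dW: "\<Delta> \<le> W" unfolding \<Delta>_def W_def
    by (rule atomic_diff_le[OF assms(2,3,4) ne assms(9) r])
  have W0: "W \<ge> 0" unfolding W_def by (simp add: sum_nonneg)
  have a0: "\<alpha> \<ge> 0"
  proof (cases "s = 1")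
    case True thus ?thesis unfolding \<alpha>_def by simp
  next
    case False
    hence s2: "real s - 1 > 0" using assms(6) by simp
    have "coherence S < 1 / (real s - 1)" using False assms(7) by simp
    hence "(real s - 1) * coherence S < 1" using s2 by (simp add: field_simps)
    thus ?thesis unfolding \<alpha>_def by simp
  qed
  have nl: "\<alpha> * Q \<le> (norm (y - f))\<^sup>2"
    using norm_lower[OF assms(1,3,4), of c] r assms(5) unfolding \<alpha>_def Q_def by simp
  have WQ: "W\<^sup>2 \<le> Q * real s" unfolding W_def Q_def
    using sum_squared_le_sum_of_squares[of "\<lambda>x. \<bar>c x\<bar>" S] assms(5) by simp
  have sp: "real s > 0" using assms(6) by simp
  show ?thesis
  proof (cases "\<Delta> \<le> 0")
    case True
    have "sqrt \<alpha> / sqrt (real s) * \<Delta> \<le> 0"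
      using True a0 sp by (intro mult_nonneg_nonpos) auto
    thus ?thesis unfolding \<alpha>_def[symmetric] \<Delta>_def[symmetric] using norm_ge_zero[of "y-f"] by linarith
  next
    case False
    have "sqrt \<alpha> / sqrt (real s) * \<Delta> \<le> sqrt \<alpha> / sqrt (real s) * W"
      using dW a0 sp by (intro mult_left_mono) auto
    also have "\<dots> = sqrt (\<alpha> * W\<^sup>2 / real s)" using W0 by (simp add: real_sqrt_mult real_sqrt_divide)
    also have "\<dots> \<le> sqrt (\<alpha> * Q)"
    proof (rule real_sqrt_le_mono)
      have "W\<^sup>2 / real s \<le> Q" using WQ sp by (simp add: divide_le_eq)
      hence "\<alpha> * (W\<^sup>2 / real s) \<le> \<alpha> * Q" using a0 by (rule mult_left_mono)
      thus "\<alpha> * W\<^sup>2 / real s \<le> \<alpha> * Q" by simp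
    qed
    also have "\<dots> \<le> sqrt ((norm (y - f))\<^sup>2)" using nl by (rule real_sqrt_le_mono)
    also have "\<dots> = norm (y - f)" by simp
    finally show ?thesis unfolding \<alpha>_def \<Delta>_def .
  qed
qed

end
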